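(* Let $n\ge1$, $0<q<\infty$ and $\pi\sim\mu_{n,q}$. Then $\mathrm{Var}(\mathrm{LIS}(\pi))\le n-1$. Furthermore, for all $t>0$, $$\mathbb{P}\big(|\mathrm{LIS}(\pi)-\mathbb{E}(\mathrm{LIS}(\pi))|>t\sqrt{n-1}\big)<2e^{-t^2/2}.$$
   Context: For $q>0$ and an integer $n\ge1$, the Mallows measure $\mu_{n,q}$ on $S_n$ is $\mu_{n,q}(\pi)=q^{\mathrm{inv}(\pi)}/Z_{n,q}$, where $\mathrm{inv}(\pi)$ is the number of pairs $i<j$ with $\pi(i)>\pi(j)$ and $Z_{n,q}$ is the normalizing constant. $\mathrm{LIS}(\pi)$ denotes the length of a longest increasing subsequence of $\pi$. *)

theory Defs
  imports "HOL-Analysis.Analysis" "HOL-Combinatorics.Permutations"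
begin

definition perms :: "nat \<Rightarrow> (nat \<Rightarrow> nat) set" where
  "perms n = {\<pi>. \<pi> permutes {1..n}}"

definition inv_count :: "nat \<Rightarrow> (nat \<Rightarrow> nat) \<Rightarrow> nat" where
  "inv_count n \<pi> = card {(i, j). i \<in> {1..n} \<and> j \<in> {1..n} \<and> i < j \<and> \<pi> i > \<pi> j}"

definition LIS :: "nat \<Rightarrow> (nat \<Rightarrow> nat) \<Rightarrow> nat" where
  "LIS n \<pi> = Max {card S | S. S \<subseteq> {1..n} \<and> (\<forall>i\<in>S. \<forall>j\<in>S. i < j \<longrightarrow> \<pi> i < \<pi> j)}"

definition mallows_Z :: "nat \<Rightarrow> real \<Rightarrow> real" where
  "mallows_Z n q = (\<Sum>\<sigma>\<in>perms n. q ^ inv_count n \<sigma>)"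

definition mallows :: "nat \<Rightarrow> real \<Rightarrow> (nat \<Rightarrow> nat) \<Rightarrow> real" where
  "mallows n q \<pi> = q ^ inv_count n \<pi> / mallows_Z n q"

definition mallows_E :: "nat \<Rightarrow> real \<Rightarrow> ((nat \<Rightarrow> nat) \<Rightarrow> real) \<Rightarrow> real" where
  "mallows_E n q X = (\<Sum>\<pi>\<in>perms n. mallows n q \<pi> * X \<pi>)"

definition mallows_Var :: "nat \<Rightarrow> real \<Rightarrow> ((nat \<Rightarrow> nat) \<Rightarrow> real) \<Rightarrow> real" where
  "mallows_Var n q X = mallows_E n q (\<lambda>\<pi>. (X \<pi> - mallows_E n q X)\<^sup>2)"

definition mallows_P :: "nat \<Rightarrow> real \<Rightarrow> ((nat \<Rightarrow> nat) \<Rightarrow> bool) \<Rightarrow> real" where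
  "mallows_P n q A = (\<Sum>\<pi>\<in>{\<pi>\<in>perms n. A \<pi>}. mallows n q \<pi>)"

end

theory Submission
  imports Defs "HOL-Probability.Hoeffding"
begin


definition avg :: "'a set \<Rightarrow> ('a \<Rightarrow> real) \<Rightarrow> ('a \<Rightarrow> real) \<Rightarrow> real" where
  "avg I w f = (\<Sum>i\<in>I. w i * f i) / (\<Sum>i\<in>I. w i)"

locale wsp =
  fixes I :: "'a set" and w :: "'a \<Rightarrow> real"
  assumes fin: "finite I" and ne: "I \<noteq> {}" and pos: "\<And>i. i \<in> I \<Longrightarrow> w i > 0"
begin

lemma Wpos: "(\<Sum>i\<in>I. w i) > 0"
  using fin ne pos by (intro sum_pos) auto

lemma avg_const[simp]: "avg I w (\<lambda>_. c) = c"
  using Wpos by (simp add: avg_def sum_distrib_right[symmetric])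

lemma avg_cong: "(\<And>i. i \<in> I \<Longrightarrow> f i = g i) \<Longrightarrow> avg I w f = avg I w g"
  by (simp add: avg_def)

lemma avg_add: "avg I w (\<lambda>i. f i + g i) = avg I w f + avg I w g"
  by (simp add: avg_def distrib_left sum.distrib add_divide_distrib)

lemma avg_diff: "avg I w (\<lambda>i. f i - g i) = avg I w f - avg I w g"
  by (simp add: avg_def right_diff_distrib sum_subtractf diff_divide_distrib)

lemma avg_cmult: "avg I w (\<lambda>i. c * f i) = c * avg I w f"
  by (simp add: avg_def sum_distrib_left mult.left_commute)

lemma avg_multc: "avg I w (\<lambda>i. f i * c) = avg I w f * c"
  using avg_cmult[of c f] by (simp add: mult.commute)

lemma avg_uminus: "avg I w (\<lambda>i. - f i) = - avg I w f"
  using avg_cmult[of "-1" f] by simp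

lemma avg_mono: "(\<And>i. i \<in> I \<Longrightarrow> f i \<le> g i) \<Longrightarrow> avg I w f \<le> avg I w g"
  unfolding avg_def using Wpos pos
  by (intro divide_right_mono sum_mono mult_left_mono) (auto intro: less_imp_le)

lemma avg_strict:
  assumes "\<And>i. i \<in> I \<Longrightarrow> f i \<le> g i" "j \<in> I" "f j < g j"
  shows "avg I w f < avg I w g"
  unfolding avg_def using Wpos
proof (intro divide_strict_right_mono sum_strict_mono_ex1)
  show "\<forall>x\<in>I. w x * f x \<le> w x * g x" using assms pos by (auto intro: mult_left_mono less_imp_le)
  show "\<exists>a\<in>I. w a * f a < w a * g a" using assms pos by auto
qed (use fin in auto)

lemma avg_exists_le: "\<exists>i\<in>I. f i \<le> avg I w f"
proof (rule ccontr)
  assume "\<not> ?thesis"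
  then have "\<And>i. i \<in> I \<Longrightarrow> avg I w f < f i" by force
  then have "avg I w (\<lambda>_. avg I w f) < avg I w f"
    using ne avg_strict[of "\<lambda>_. avg I w f" f] by (metis all_not_in_conv less_imp_le)
  then show False by simp
qed

lemma avg_abs: "\<bar>avg I w f\<bar> \<le> avg I w (\<lambda>i. \<bar>f i\<bar>)"
proof -
  have "avg I w f \<le> avg I w (\<lambda>i. \<bar>f i\<bar>)" by (rule avg_mono) auto
  moreover have "- avg I w f \<le> avg I w (\<lambda>i. \<bar>f i\<bar>)"
    unfolding avg_uminus[symmetric] by (rule avg_mono) auto
  ultimately show ?thesis by linarith
qed

lemma avg_centered: "avg I w (\<lambda>i. f i - avg I w f) = 0"
  by (simp add: avg_diff)

lemma exp_step:
  assumes b: "\<And>i. i \<in> I \<Longrightarrow> \<bar>g i\<bar> \<le> 1" and m: "avg I w g = 0" and l: "l \<ge> 0"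
  shows "avg I w (\<lambda>i. exp (l * g i)) \<le> exp (l\<^sup>2 / 2)"
proof -
  have cv: "convex_on UNIV (\<lambda>x. exp (l * x))" by (rule convex_on_exp[OF l])
  have pt: "exp (l * y) \<le> (1 - y) / 2 * exp (- l) + (1 + y) / 2 * exp l" if "\<bar>y\<bar> \<le> 1" for y
  proof -
    define t where "t = (1 + y) / 2"
    have t01: "t \<ge> 0" "t \<le> 1" using that by (auto simp: t_def)
    have "exp (l * ((1 - t) * (-1) + t * 1)) \<le> (1 - t) * exp (l * (-1)) + t * exp (l * 1)"
      using convex_onD[OF cv, of t "-1" 1] t01 by simp
    moreover have "(1 - t) * (-1) + t * 1 = y" by (simp add: t_def field_simps)
    moreover have "1 - (1 + y) / 2 = (1 - y) / (2::real)" by (simp add: field_simps)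
    ultimately show ?thesis by (simp add: t_def)
  qed
  have "avg I w (\<lambda>i. exp (l * g i)) \<le> avg I w (\<lambda>i. (1 - g i) / 2 * exp (- l) + (1 + g i) / 2 * exp l)"
    using pt b by (intro avg_mono) auto
  also have "avg I w (\<lambda>i. (1 - g i) / 2 * exp (- l) + (1 + g i) / 2 * exp l)
     = avg I w (\<lambda>i. (exp (- l) + exp l) / 2 + g i * ((exp l - exp (- l)) / 2))"
    by (intro avg_cong) (simp add: field_simps)
  also have "\<dots> = (exp (- l) + exp l) / 2"
    by (subst avg_add, subst avg_multc) (simp add: m)
  also have "\<dots> \<le> exp (l\<^sup>2 / 2)"
  proof -
    have h: "-(2*l) * (1/2) + ln (1 + (1/2) * (exp (2*l) - 1)) \<le> (2*l)\<^sup>2 / 8"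
      using Hoeffdings_lemma_aux[of "2*l" "1/2"] l by simp
    have pos1: "1 + (1/2) * (exp (2*l) - 1) > 0"
      using exp_gt_zero[of "2*l"] by (simp add: field_simps add_pos_pos)
    have "(exp (- l) + exp l) / 2 = exp (-(2*l) * (1/2)) * (1 + (1/2) * (exp (2*l) - 1))"
      by (simp add: field_simps exp_add[symmetric] exp_minus_inverse)
    also have "\<dots> = exp (-(2*l) * (1/2) + ln (1 + (1/2) * (exp (2*l) - 1)))"
      by (simp only: exp_add exp_ln[OF pos1])
    also have "\<dots> \<le> exp ((2*l)\<^sup>2 / 8)" using h by simp
    also have "(2*l)\<^sup>2 / 8 = l\<^sup>2 / 2" by (simp add: power2_eq_square)
    finally show ?thesis .
  qed
  finally show ?thesis .
qed

end




lemma avg_singleton: "w x > 0 \<Longrightarrow> avg {x} w f = f x"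
  by (simp add: avg_def)

fun Kc :: "nat \<Rightarrow> nat list set" where
  "Kc 0 = {[]}"
| "Kc (Suc m) = (\<lambda>(c,cs). c # cs) ` ({..m} \<times> Kc m)"

lemma Kc_Cons[simp]: "c # cs \<in> Kc (Suc m) \<longleftrightarrow> c \<le> m \<and> cs \<in> Kc m" by auto

lemma Kc_Suc_mem: "x \<in> Kc (Suc m) \<longleftrightarrow> (\<exists>c cs. x = c # cs \<and> c \<le> m \<and> cs \<in> Kc m)" by auto

lemma Kc_length: "cs \<in> Kc m \<Longrightarrow> length cs = m"
  by (induction m arbitrary: cs) auto

lemma Kc_finite: "finite (Kc m)" by (induction m) auto

declare Kc.simps(2)[simp del]

lemma Kc_ne: "Kc m \<noteq> {}" by (induction m) (auto simp: Kc.simps)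

lemma Kc_one: "Kc (Suc 0) = {[0]}" by (auto simp: Kc.simps)

lemma Kc_sum: "(\<Sum>x\<in>Kc (Suc m). h x) = (\<Sum>c\<le>m. \<Sum>cs\<in>Kc m. h (c # cs))"
proof -
  have inj: "inj_on (\<lambda>x. fst x # snd x) ({..m} \<times> Kc m)" by (auto simp: inj_on_def)
  have e: "Kc (Suc m) = (\<lambda>x. fst x # snd x) ` ({..m} \<times> Kc m)" by (simp add: Kc.simps split_def)
  show ?thesis unfolding e sum.reindex[OF inj] by (simp add: sum.cartesian_product split_def)
qed

lemma Kc_card: "card (Kc m) = fact m"
proof (induction m)
  case (Suc m)
  have inj: "inj_on (\<lambda>(c,cs). c # cs) ({..m} \<times> Kc m)" by (auto simp: inj_on_def)
  show ?case using Suc by (simp add: Kc.simps card_image[OF inj] card_cartesian_product)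
qed simp

definition W :: "real \<Rightarrow> nat list \<Rightarrow> real" where "W q cs = q ^ sum_list cs"

lemma wsp_Kc: "q > 0 \<Longrightarrow> wsp (Kc m) (W q)"
  by unfold_locales (auto simp: Kc_finite Kc_ne W_def)

lemma wsp_qc: "q > 0 \<Longrightarrow> wsp {..m} (\<lambda>c. q ^ c)"
  by unfold_locales auto

lemma Ew_Suc:
  assumes q: "q > 0"
  shows "avg (Kc (Suc m)) (W q) F = avg {..m} (\<lambda>c. q^c) (\<lambda>c. avg (Kc m) (W q) (\<lambda>cs. F (c # cs)))"
proof -
  interpret K: wsp "Kc m" "W q" using wsp_Kc[OF q] .
  define Z where "Z = (\<Sum>cs\<in>Kc m. W q cs)"
  have Z: "Z > 0" using K.Wpos by (simp add: Z_def)
  have eachc: "Z * (q^c * avg (Kc m) (W q) (\<lambda>cs. F (c # cs))) = (\<Sum>cs\<in>Kc m. q^c * (W q cs * F (c # cs)))" for c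
  proof -
    have "Z * (q^c * avg (Kc m) (W q) (\<lambda>cs. F (c # cs))) = q^c * (\<Sum>cs\<in>Kc m. W q cs * F (c # cs))"
      using Z by (simp add: avg_def Z_def[symmetric])
    then show ?thesis by (simp add: sum_distrib_left)
  qed
  have num: "(\<Sum>x\<in>Kc (Suc m). W q x * F x) = Z * (\<Sum>c\<le>m. q^c * avg (Kc m) (W q) (\<lambda>cs. F (c # cs)))"
    unfolding Kc_sum sum_distrib_left eachc by (simp add: W_def power_add mult.assoc)
  have den: "(\<Sum>x\<in>Kc (Suc m). W q x) = Z * (\<Sum>c\<le>m. q^c)"
    unfolding Kc_sum
    by (simp add: W_def power_add sum_distrib_left sum_distrib_right Z_def mult.commute sum.swap[of _ "Kc m"])
  show ?thesis
    unfolding avg_def[of "Kc (Suc m)"] num den using Z by (simp add: avg_def)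
qed

definition BD :: "nat \<Rightarrow> (nat list \<Rightarrow> real) \<Rightarrow> bool" where
  "BD m F \<longleftrightarrow> (\<forall>p c c' cs. p @ c # cs \<in> Kc m \<longrightarrow> p @ c' # cs \<in> Kc m \<longrightarrow>
       \<bar>F (p @ c # cs) - F (p @ c' # cs)\<bar> \<le> 1)"

lemma BD_Cons: "BD (Suc m) F \<Longrightarrow> c \<le> m \<Longrightarrow> BD m (\<lambda>cs. F (c # cs))"
  unfolding BD_def
proof (intro allI impI)
  fix p c0 c' cs
  assume "\<forall>p c c' cs. p @ c # cs \<in> Kc (Suc m) \<longrightarrow> p @ c' # cs \<in> Kc (Suc m) \<longrightarrow>
       \<bar>F (p @ c # cs) - F (p @ c' # cs)\<bar> \<le> 1" "c \<le> m" "p @ c0 # cs \<in> Kc m" "p @ c' # cs \<in> Kc m"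
  then show "\<bar>F (c # p @ c0 # cs) - F (c # p @ c' # cs)\<bar> \<le> 1"
    by (metis Cons_eq_appendI Kc_Cons)
qed

lemma BD_head: "BD (Suc m) F \<Longrightarrow> c \<le> m \<Longrightarrow> c' \<le> m \<Longrightarrow> cs \<in> Kc m \<Longrightarrow> \<bar>F (c # cs) - F (c' # cs)\<bar> \<le> 1"
  unfolding BD_def by (metis Kc_Cons append_Nil)

lemma BD_uminus: "BD m F \<Longrightarrow> BD m (\<lambda>cs. - F cs)"
  unfolding BD_def by (metis abs_minus_commute minus_diff_eq minus_diff_minus)

lemma G_close:
  assumes q: "q > 0" and bd: "BD (Suc (Suc m)) F" and c: "c \<le> Suc m"
  defines "G \<equiv> (\<lambda>c. avg (Kc (Suc m)) (W q) (\<lambda>cs. F (c # cs)))"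
  shows "\<bar>G c - avg {..Suc m} (\<lambda>c. q^c) G\<bar> \<le> 1"
proof -
  interpret K: wsp "Kc (Suc m)" "W q" using wsp_Kc[OF q] .
  interpret C: wsp "{..Suc m}" "\<lambda>c. q^c" using wsp_qc[OF q] .
  have pair: "\<bar>G c - G c'\<bar> \<le> 1" if "c' \<le> Suc m" for c'
  proof -
    have "\<bar>G c - G c'\<bar> = \<bar>avg (Kc (Suc m)) (W q) (\<lambda>cs. F (c # cs) - F (c' # cs))\<bar>"
      by (simp add: G_def K.avg_diff)
    also have "\<dots> \<le> avg (Kc (Suc m)) (W q) (\<lambda>cs. \<bar>F (c # cs) - F (c' # cs)\<bar>)" by (rule K.avg_abs)
    also have "\<dots> \<le> avg (Kc (Suc m)) (W q) (\<lambda>cs. 1)"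
      by (rule K.avg_mono) (use BD_head[OF bd c that] in auto)
    finally show ?thesis by simp
  qed
  have "\<bar>G c - avg {..Suc m} (\<lambda>c. q^c) G\<bar> = \<bar>avg {..Suc m} (\<lambda>c. q^c) (\<lambda>c'. G c - G c')\<bar>"
    by (simp add: C.avg_diff)
  also have "\<dots> \<le> avg {..Suc m} (\<lambda>c. q^c) (\<lambda>c'. \<bar>G c - G c'\<bar>)" by (rule C.avg_abs)
  also have "\<dots> \<le> avg {..Suc m} (\<lambda>c. q^c) (\<lambda>c'. 1)"
    by (rule C.avg_mono) (use pair in auto)
  finally show ?thesis by simp
qed

theorem AZ:
  assumes q: "q > 0" and l: "l \<ge> 0"
  shows "BD (Suc m) F \<Longrightarrow>
    avg (Kc (Suc m)) (W q) (\<lambda>cs. exp (l * (F cs - avg (Kc (Suc m)) (W q) F))) \<le> exp (l\<^sup>2 / 2) ^ m"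
proof (induction m arbitrary: F)
  case 0
  have "W q [0] > 0" by (simp add: W_def)
  then show ?case by (simp add: Kc_one avg_singleton)
next
  case (Suc m)
  interpret K: wsp "Kc (Suc m)" "W q" using wsp_Kc[OF q] .
  interpret C: wsp "{..Suc m}" "\<lambda>c. q^c" using wsp_qc[OF q] .
  define G where "G = (\<lambda>c. avg (Kc (Suc m)) (W q) (\<lambda>cs. F (c # cs)))"
  define \<mu> where "\<mu> = avg (Kc (Suc (Suc m))) (W q) F"
  have mu: "\<mu> = avg {..Suc m} (\<lambda>c. q^c) G" unfolding \<mu>_def G_def by (rule Ew_Suc[OF q])
  have inner: "avg (Kc (Suc m)) (W q) (\<lambda>cs. exp (l * (F (c # cs) - \<mu>)))
      \<le> exp (l * (G c - \<mu>)) * exp (l\<^sup>2 / 2) ^ m" if c: "c \<le> Suc m" for c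
  proof -
    have "avg (Kc (Suc m)) (W q) (\<lambda>cs. exp (l * (F (c # cs) - \<mu>)))
        = avg (Kc (Suc m)) (W q) (\<lambda>cs. exp (l * (G c - \<mu>)) * exp (l * (F (c # cs) - G c)))"
      by (intro K.avg_cong) (simp add: exp_add[symmetric] algebra_simps)
    also have "\<dots> = exp (l * (G c - \<mu>)) * avg (Kc (Suc m)) (W q) (\<lambda>cs. exp (l * (F (c # cs) - G c)))"
      by (rule K.avg_cmult)
    also have "\<dots> \<le> exp (l * (G c - \<mu>)) * exp (l\<^sup>2 / 2) ^ m"
      using Suc.IH[OF BD_Cons[OF Suc.prems c]] by (simp add: G_def)
    finally show ?thesis .
  qed
  have "avg (Kc (Suc (Suc m))) (W q) (\<lambda>cs. exp (l * (F cs - \<mu>)))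
      = avg {..Suc m} (\<lambda>c. q^c) (\<lambda>c. avg (Kc (Suc m)) (W q) (\<lambda>cs. exp (l * (F (c # cs) - \<mu>))))"
    by (rule Ew_Suc[OF q])
  also have "\<dots> \<le> avg {..Suc m} (\<lambda>c. q^c) (\<lambda>c. exp (l * (G c - \<mu>)) * exp (l\<^sup>2 / 2) ^ m)"
    by (rule C.avg_mono) (use inner in auto)
  also have "\<dots> = avg {..Suc m} (\<lambda>c. q^c) (\<lambda>c. exp (l * (G c - \<mu>))) * exp (l\<^sup>2 / 2) ^ m"
    by (rule C.avg_multc)
  also have "\<dots> \<le> exp (l\<^sup>2 / 2) * exp (l\<^sup>2 / 2) ^ m"
  proof (rule mult_right_mono)
    show "avg {..Suc m} (\<lambda>c. q^c) (\<lambda>c. exp (l * (G c - \<mu>))) \<le> exp (l\<^sup>2 / 2)"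
    proof (rule C.exp_step[OF _ _ l])
      show "\<bar>G i - \<mu>\<bar> \<le> 1" if "i \<in> {..Suc m}" for i
        using G_close[OF q Suc.prems, of i] that by (simp add: mu G_def)
      show "avg {..Suc m} (\<lambda>c. q^c) (\<lambda>i. G i - \<mu>) = 0"
        by (simp add: mu C.avg_centered)
    qed
  qed simp
  finally show ?case by (simp add: \<mu>_def)
qed

theorem VB:
  assumes q: "q > 0"
  shows "BD (Suc m) F \<Longrightarrow>
    avg (Kc (Suc m)) (W q) (\<lambda>cs. (F cs - avg (Kc (Suc m)) (W q) F)\<^sup>2) \<le> real m"
proof (induction m arbitrary: F)
  case 0
  have "W q [0] > 0" by (simp add: W_def)
  then show ?case by (simp add: Kc_one avg_singleton)
next
  case (Suc m)
  interpret K: wsp "Kc (Suc m)" "W q" using wsp_Kc[OF q] .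
  interpret C: wsp "{..Suc m}" "\<lambda>c. q^c" using wsp_qc[OF q] .
  define G where "G = (\<lambda>c. avg (Kc (Suc m)) (W q) (\<lambda>cs. F (c # cs)))"
  define \<mu> where "\<mu> = avg (Kc (Suc (Suc m))) (W q) F"
  have mu: "\<mu> = avg {..Suc m} (\<lambda>c. q^c) G" unfolding \<mu>_def G_def by (rule Ew_Suc[OF q])
  have inner: "avg (Kc (Suc m)) (W q) (\<lambda>cs. (F (c # cs) - \<mu>)\<^sup>2) \<le> real m + 1" if c: "c \<le> Suc m" for c
  proof -
    have "avg (Kc (Suc m)) (W q) (\<lambda>cs. (F (c # cs) - \<mu>)\<^sup>2)
        = avg (Kc (Suc m)) (W q) (\<lambda>cs. (F (c # cs) - G c)\<^sup>2 + ((2 * (G c - \<mu>)) * (F (c # cs) - G c) + (G c - \<mu>)\<^sup>2))"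
      by (intro K.avg_cong) (simp add: power2_eq_square algebra_simps)
    also have "\<dots> = avg (Kc (Suc m)) (W q) (\<lambda>cs. (F (c # cs) - G c)\<^sup>2) + (G c - \<mu>)\<^sup>2"
      by (simp add: K.avg_add K.avg_cmult K.avg_diff G_def)
    also have "\<dots> \<le> real m + 1"
    proof (rule add_mono)
      show "avg (Kc (Suc m)) (W q) (\<lambda>cs. (F (c # cs) - G c)\<^sup>2) \<le> real m"
        using Suc.IH[OF BD_Cons[OF Suc.prems c]] by (simp add: G_def)
      have "\<bar>G c - \<mu>\<bar> \<le> 1" using G_close[OF q Suc.prems c] by (simp add: mu G_def)
      then show "(G c - \<mu>)\<^sup>2 \<le> 1"
        by (metis abs_le_square_iff abs_one one_power2)
    qed
    finally show ?thesis .
  qed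
  have "avg (Kc (Suc (Suc m))) (W q) (\<lambda>cs. (F cs - \<mu>)\<^sup>2)
      = avg {..Suc m} (\<lambda>c. q^c) (\<lambda>c. avg (Kc (Suc m)) (W q) (\<lambda>cs. (F (c # cs) - \<mu>)\<^sup>2))"
    by (rule Ew_Suc[OF q])
  also have "\<dots> \<le> avg {..Suc m} (\<lambda>c. q^c) (\<lambda>c. real m + 1)"
    by (rule C.avg_mono) (use inner in auto)
  finally show ?case by (simp add: \<mu>_def)
qed




definition sh :: "nat \<Rightarrow> nat \<Rightarrow> nat" where "sh c x = (if x < c then x else Suc x)"

lemma sh_less_iff[simp]: "sh c x < sh c y \<longleftrightarrow> x < y" by (simp add: sh_def)
lemma sh_eq_iff[simp]: "sh c x = sh c y \<longleftrightarrow> x = y" by (auto simp: sh_def)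
lemma sh_le: "sh c x \<le> Suc x" "x \<le> sh c x" by (auto simp: sh_def)
lemma strict_mono_sh: "strict_mono (sh c)" by (simp add: strict_mono_def)

fun pat :: "nat list \<Rightarrow> nat list" where
  "pat [] = []"
| "pat (c # cs) = c # map (sh c) (pat cs)"

fun Gp :: "nat list \<Rightarrow> nat \<Rightarrow> nat" where
  "Gp [] = id"
| "Gp (a # p) = sh a \<circ> Gp p"

lemma strict_mono_Gp: "strict_mono (Gp p)"
  by (induction p) (auto simp: strict_mono_def)

lemma pat_append: "pat (p @ x) = pat p @ map (Gp p) (pat x)"
  by (induction p) auto

lemma length_pat[simp]: "length (pat cs) = length cs"
  by (induction cs) auto

lemma pat_props: "cs \<in> Kc m \<Longrightarrow> distinct (pat cs) \<and> set (pat cs) = {..<m}"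
proof (induction m arbitrary: cs)
  case 0 then show ?case by simp
next
  case (Suc m)
  then obtain c ds where cs: "cs = c # ds" "c \<le> m" "ds \<in> Kc m" by (auto simp: Kc_Suc_mem)
  from Suc.IH[OF cs(3)] have ih: "distinct (pat ds)" "set (pat ds) = {..<m}" by auto
  have inj: "inj (sh c)" by (simp add: inj_on_def)
  have "sh c ` {..<m} = {..<Suc m} - {c}"
  proof (intro set_eqI iffI)
    fix y assume "y \<in> sh c ` {..<m}" then show "y \<in> {..<Suc m} - {c}" by (auto simp: sh_def)
  next
    fix y assume y: "y \<in> {..<Suc m} - {c}"
    show "y \<in> sh c ` {..<m}"
    proof (cases "y < c")
      case True then show ?thesis using y cs(2) by (intro image_eqI[of _ _ y]) (auto simp: sh_def)
    next
      case False then show ?thesis using y by (intro image_eqI[of _ _ "y - 1"]) (auto simp: sh_def)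
    qed
  qed
  then show ?case using ih cs by (auto simp: distinct_map inj_on_def)
qed

lemma pat_inj: "pat cs = pat ds \<Longrightarrow> cs = ds"
proof (induction cs arbitrary: ds)
  case Nil then show ?case by (cases ds) auto
next
  case (Cons c cs)
  then obtain d ds' where ds: "ds = d # ds'" by (cases ds) auto
  with Cons.prems have "c = d" "map (sh c) (pat cs) = map (sh c) (pat ds')" by auto
  then have "pat cs = pat ds'" by (simp add: inj_map_eq_map inj_on_def)
  with Cons.IH ds \<open>c = d\<close> show ?case by auto
qed


definition permof :: "nat \<Rightarrow> nat list \<Rightarrow> nat \<Rightarrow> nat" where
  "permof n cs i = (if i \<in> {1..n} then Suc (pat cs ! (i - 1)) else i)"

lemma permof_perm:
  assumes cs: "cs \<in> Kc n"
  shows "permof n cs \<in> perms n"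
proof -
  have len: "length (pat cs) = n" using Kc_length[OF cs] by simp
  from pat_props[OF cs] have d: "distinct (pat cs)" and st: "set (pat cs) = {..<n}" by auto
  have inj: "inj_on (permof n cs) {1..n}"
  proof (rule inj_onI)
    fix i j assume ij: "i \<in> {1..n}" "j \<in> {1..n}" "permof n cs i = permof n cs j"
    then have e: "pat cs ! (i - 1) = pat cs ! (j - 1)" by (simp add: permof_def)
    have "i - 1 < length (pat cs)" "j - 1 < length (pat cs)" using ij(1,2) len by auto
    then have "i - 1 = j - 1" using nth_eq_iff_index_eq[OF d] e by blast
    then show "i = j" using ij(1,2) by (cases i; cases j) auto
  qed
  have img: "permof n cs ` {1..n} = {1..n}"
  proof (intro set_eqI iffI)
    fix y assume "y \<in> permof n cs ` {1..n}"
    then obtain i where i: "i \<in> {1..n}" "y = Suc (pat cs ! (i - 1))" by (auto simp: permof_def)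
    have "i - 1 < length (pat cs)" using i(1) len by auto
    then have "pat cs ! (i - 1) \<in> set (pat cs)" by (rule nth_mem)
    then have "pat cs ! (i - 1) < n" using st by simp
    then show "y \<in> {1..n}" using i(2) by simp
  next
    fix y assume y: "y \<in> {1..n}"
    then have "y - 1 < n" by (simp, arith)
    then have "y - 1 \<in> set (pat cs)" using st by simp
    then obtain k where k: "k < length (pat cs)" "pat cs ! k = y - 1" by (metis in_set_conv_nth)
    have "permof n cs (Suc k) = y" using k y len by (simp add: permof_def)
    moreover have "Suc k \<in> {1..n}" using k len by simp
    ultimately show "y \<in> permof n cs ` {1..n}" by (metis image_eqI)
  qed
  have b: "bij_betw (permof n cs) {1..n} {1..n}" unfolding bij_betw_def using inj img by blast
  have "permof n cs permutes {1..n}"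
    by (rule bij_imp_permutes[OF b]) (unfold permof_def, rule if_not_P, assumption)
  then show ?thesis by (simp add: perms_def)
qed

lemma permof_inj: "inj_on (permof n) (Kc n)"
proof (rule inj_onI)
  fix cs ds assume cs: "cs \<in> Kc n" and ds: "ds \<in> Kc n" and e: "permof n cs = permof n ds"
  have "pat cs = pat ds"
  proof (rule nth_equalityI)
    show "length (pat cs) = length (pat ds)" using Kc_length[OF cs] Kc_length[OF ds] by simp
    fix k assume "k < length (pat cs)"
    then have "k < n" using Kc_length[OF cs] by simp
    have "permof n cs (Suc k) = permof n ds (Suc k)" by (rule fun_cong[OF e])
    then show "pat cs ! k = pat ds ! k" using \<open>k < n\<close> by (simp add: permof_def)
  qed
  then show "cs = ds" by (rule pat_inj)
qed

lemma permof_bij: "bij_betw (permof n) (Kc n) (perms n)"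
proof -
  have fin: "finite (perms n)" unfolding perms_def by (rule finite_permutations) simp
  have sub: "permof n ` Kc n \<subseteq> perms n" using permof_perm by auto
  have "card (permof n ` Kc n) = card (perms n)"
    unfolding card_image[OF permof_inj] Kc_card perms_def using card_permutations[of "{1..n}" n] by simp
  then have "permof n ` Kc n = perms n" using card_subset_eq[OF fin sub] by simp
  then show ?thesis using permof_inj by (simp add: bij_betw_def)
qed

lemma sum_perms: "(\<Sum>\<pi>\<in>perms n. h \<pi>) = (\<Sum>cs\<in>Kc n. h (permof n cs))"
  using sum.reindex_bij_betw[OF permof_bij, of h] by simp

fun invw :: "nat list \<Rightarrow> nat" where
  "invw [] = 0"
| "invw (x # xs) = length (filter (\<lambda>y. y < x) xs) + invw xs"

lemma invw_map: "strict_mono f \<Longrightarrow> invw (map f xs) = invw xs"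
  by (induction xs) (auto simp: filter_map comp_def strict_mono_less)

lemma invw_pat: "cs \<in> Kc m \<Longrightarrow> invw (pat cs) = sum_list cs"
proof (induction m arbitrary: cs)
  case 0 then show ?case by simp
next
  case (Suc m)
  then obtain c ds where cs: "cs = c # ds" "c \<le> m" "ds \<in> Kc m" by (auto simp: Kc_Suc_mem)
  from pat_props[OF cs(3)] have d: "distinct (pat ds)" and st: "set (pat ds) = {..<m}" by auto
  have shc: "(\<lambda>y. y < c) \<circ> sh c = (\<lambda>y. y < c)" by (rule ext) (simp add: sh_def)
  have "length (filter (\<lambda>y. y < c) (map (sh c) (pat ds))) = card ({y. y < c} \<inter> {..<m})"
    by (simp add: filter_map shc distinct_length_filter[OF d] st)
  also have "{y. y < c} \<inter> {..<m} = {..<c}" using cs(2) by auto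
  finally show ?case using Suc.IH[OF cs(3)] cs(1) by (simp add: invw_map strict_mono_sh)
qed

lemma invw_card: "invw xs = card {(i, j). i < j \<and> j < length xs \<and> xs ! j < xs ! i}"
proof (induction xs)
  case Nil then show ?case by simp
next
  case (Cons x xs)
  define A where "A = (\<lambda>j. (0::nat, Suc j)) ` {j. j < length xs \<and> xs ! j < x}"
  define B where "B = (\<lambda>(i, j). (Suc i, Suc j)) ` {(i, j). i < j \<and> j < length xs \<and> xs ! j < xs ! i}"
  have eq: "{(i, j). i < j \<and> j < length (x # xs) \<and> (x # xs) ! j < (x # xs) ! i} = A \<union> B"
  proof (intro set_eqI iffI)
    fix z assume z: "z \<in> {(i, j). i < j \<and> j < length (x # xs) \<and> (x # xs) ! j < (x # xs) ! i}"
    obtain i j where zij: "z = (i, j)" by (cases z)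
    with z obtain j' where j': "j = Suc j'" by (cases j) auto
    show "z \<in> A \<union> B"
    proof (cases i)
      case 0 then show ?thesis using z zij j' by (auto simp: A_def)
    next
      case (Suc i')
      then have "(i', j') \<in> {(i, j). i < j \<and> j < length xs \<and> xs ! j < xs ! i}" using z zij j' by auto
      then have "(Suc i', Suc j') \<in> B" unfolding B_def by (rule rev_image_eqI) simp
      then show ?thesis using zij j' Suc by simp
    qed
  next
    fix z assume "z \<in> A \<union> B"
    then show "z \<in> {(i, j). i < j \<and> j < length (x # xs) \<and> (x # xs) ! j < (x # xs) ! i}"
      by (auto simp: A_def B_def)
  qed
  have disj: "A \<inter> B = {}" by (auto simp: A_def B_def)
  have finA: "finite A" by (simp add: A_def)
  have finB: "finite B"
  proof -
    have "{(i, j). i < j \<and> j < length xs \<and> xs ! j < xs ! i} \<subseteq> {..<length xs} \<times> {..<length xs}" by auto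
    then show ?thesis unfolding B_def by (meson finite_SigmaI finite_imageI finite_lessThan finite_subset)
  qed
  have cA: "card A = length (filter (\<lambda>y. y < x) xs)"
    unfolding A_def by (subst card_image) (auto simp: inj_on_def length_filter_conv_card)
  have cB: "card B = card {(i, j). i < j \<and> j < length xs \<and> xs ! j < xs ! i}"
    unfolding B_def by (rule card_image) (auto simp: inj_on_def)
  show ?case unfolding eq card_Un_disjoint[OF finA finB disj] cA cB using Cons.IH by simp
qed

lemma inv_permof:
  assumes cs: "cs \<in> Kc n"
  shows "inv_count n (permof n cs) = sum_list cs"
proof -
  have len: "length (pat cs) = n" using Kc_length[OF cs] by simp
  define L where "L = {(i, j). i \<in> {1..n} \<and> j \<in> {1..n} \<and> i < j \<and> permof n cs i > permof n cs j}"
  define R where "R = {(i, j). i < j \<and> j < length (pat cs) \<and> pat cs ! j < pat cs ! i}"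
  have L1: "(Suc a, Suc b) \<in> L \<longleftrightarrow> (a, b) \<in> R" for a b
    unfolding L_def R_def len by (simp add: permof_def)
  have L0: "(0, b) \<notin> L" "(a, 0) \<notin> L" for a b unfolding L_def by auto
  have eq: "L = (\<lambda>(i, j). (Suc i, Suc j)) ` R"
  proof (intro set_eqI iffI)
    fix z assume z: "z \<in> L"
    obtain i j where zij: "z = (i, j)" by (cases z)
    show "z \<in> (\<lambda>(i, j). (Suc i, Suc j)) ` R"
    proof (cases i)
      case 0 then show ?thesis using z zij L0 by simp
    next
      case (Suc a)
      show ?thesis
      proof (cases j)
        case 0 then show ?thesis using z zij L0 by simp
      next
        case (Suc b)
        then have "(a, b) \<in> R" using z zij \<open>i = Suc a\<close> L1 by simp
        then show ?thesis using zij Suc \<open>i = Suc a\<close> by (auto intro!: image_eqI[of _ _ "(a, b)"])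
      qed
    qed
  next
    fix z assume "z \<in> (\<lambda>(i, j). (Suc i, Suc j)) ` R"
    then obtain a b where "z = (Suc a, Suc b)" "(a, b) \<in> R" by auto
    then show "z \<in> L" using L1 by simp
  qed
  have "inv_count n (permof n cs) = card L" unfolding inv_count_def L_def by simp
  also have "\<dots> = card R" unfolding eq by (rule card_image) (auto simp: inj_on_def)
  also have "\<dots> = invw (pat cs)" by (simp add: invw_card R_def)
  also have "\<dots> = sum_list cs" by (rule invw_pat[OF cs])
  finally show ?thesis .
qed




definition incr :: "(nat \<Rightarrow> nat) \<Rightarrow> nat set \<Rightarrow> bool" where
  "incr \<pi> S \<longleftrightarrow> (\<forall>i\<in>S. \<forall>j\<in>S. i < j \<longrightarrow> \<pi> i < \<pi> j)"

lemma incr_subset: "incr \<pi> S \<Longrightarrow> S' \<subseteq> S \<Longrightarrow> incr \<pi> S'"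
  by (auto simp: incr_def)

lemma inc_move:
  fixes \<pi> \<pi>' :: "nat \<Rightarrow> nat"
  assumes pre: "\<forall>i\<in>T. i < P \<longrightarrow> \<pi>' i = \<pi> i"
    and M: "\<forall>i\<in>T. \<forall>j\<in>T. P < i \<longrightarrow> P < j \<longrightarrow> \<pi> i < \<pi> j \<longrightarrow> \<pi>' i < \<pi>' j"
    and C1: "\<forall>j\<in>T. P < j \<longrightarrow> \<pi> P < \<pi> j \<longrightarrow> \<pi> P \<le> \<pi>' j"
    and C2: "\<forall>i\<in>T. \<forall>j\<in>T. P < i \<longrightarrow> P < j \<longrightarrow> \<pi> i < \<pi> j \<longrightarrow> \<pi> i \<le> \<pi>' j"
    and S: "finite S" "S \<subseteq> T" "incr \<pi> S"
  shows "\<exists>S'\<subseteq>S. incr \<pi>' S' \<and> card S \<le> Suc (card S')"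
proof (cases "P \<in> S")
  case True
  define S' where "S' = S - {P}"
  have "incr \<pi>' S'"
    unfolding incr_def
  proof (intro ballI impI)
    fix i j assume ij: "i \<in> S'" "j \<in> S'" "i < j"
    then have iT: "i \<in> T" "j \<in> T" "i \<noteq> P" "j \<noteq> P" "i \<in> S" "j \<in> S" using S by (auto simp: S'_def)
    have lt: "\<pi> i < \<pi> j" using S(3) ij iT by (auto simp: incr_def)
    consider "j < P" | "i < P" "P < j" | "P < i" using ij iT by linarith
    then show "\<pi>' i < \<pi>' j"
    proof cases
      case 1 then show ?thesis using pre iT lt ij by auto
    next
      case 2
      have "\<pi> i < \<pi> P" "\<pi> P < \<pi> j" using S(3) True iT 2 by (auto simp: incr_def)
      then show ?thesis using pre C1 iT 2 by fastforce
    next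
      case 3 then show ?thesis using M iT lt ij by auto
    qed
  qed
  moreover have "card S \<le> Suc (card S')" using True S(1) by (simp add: S'_def card_Suc_Diff1)
  ultimately show ?thesis unfolding S'_def by blast
next
  case False
  show ?thesis
  proof (cases "{j\<in>S. P < j} = {}")
    case True
    have "incr \<pi>' S"
      unfolding incr_def
    proof (intro ballI impI)
      fix i j assume ij: "i \<in> S" "j \<in> S" "i < j"
      have "j < P" using True False ij by (metis (mono_tags, lifting) empty_iff mem_Collect_eq nat_neq_iff)
      have T: "i \<in> T" "j \<in> T" using S(2) ij by auto
      have "i < P" using \<open>j < P\<close> ij(3) by simp
      then have "\<pi>' i = \<pi> i" "\<pi>' j = \<pi> j" using pre T \<open>j < P\<close> by auto
      moreover have "\<pi> i < \<pi> j" using S(3) ij by (auto simp: incr_def)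
      ultimately show "\<pi>' i < \<pi>' j" by simp
    qed
    then show ?thesis by auto
  next
    case ne: False
    define m where "m = Min {j\<in>S. P < j}"
    have fin: "finite {j\<in>S. P < j}" using S(1) by simp
    have mS: "m \<in> S" "P < m" using Min_in[OF fin ne] by (auto simp: m_def)
    have mmin: "m \<le> j" if "j \<in> S" "P < j" for j using Min_le[OF fin] that by (auto simp: m_def)
    define S' where "S' = S - {m}"
    have "incr \<pi>' S'"
      unfolding incr_def
    proof (intro ballI impI)
      fix i j assume ij: "i \<in> S'" "j \<in> S'" "i < j"
      then have iT: "i \<in> T" "j \<in> T" "i \<noteq> P" "j \<noteq> P" "i \<in> S" "j \<in> S" "i \<noteq> m" "j \<noteq> m"
        using S False by (auto simp: S'_def)
      have lt: "\<pi> i < \<pi> j" using S(3) ij iT by (auto simp: incr_def)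
      consider "j < P" | "i < P" "P < j" | "P < i" using ij iT by linarith
      then show "\<pi>' i < \<pi>' j"
      proof cases
        case 1 then show ?thesis using pre iT lt ij by auto
      next
        case 2
        have "m < j" using mmin[OF iT(6) 2(2)] iT by simp
        have mT: "m \<in> T" using mS S by auto
        have "\<pi> i < \<pi> m" "\<pi> m < \<pi> j" using S(3) iT 2 mS \<open>m < j\<close> by (auto simp: incr_def)
        moreover have "\<pi> m \<le> \<pi>' j" using C2 mT iT mS 2 \<open>\<pi> m < \<pi> j\<close> by blast
        ultimately show ?thesis using pre iT 2 by auto
      next
        case 3 then show ?thesis using M iT lt ij by auto
      qed
    qed
    moreover have "card S \<le> Suc (card S')" using mS S(1) by (simp add: S'_def card_Suc_Diff1)
    ultimately show ?thesis unfolding S'_def by blast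
  qed
qed

lemma LIS_set: "{card S | S. S \<subseteq> {1..n} \<and> (\<forall>i\<in>S. \<forall>j\<in>S. i < j \<longrightarrow> \<pi> i < \<pi> j)}
   = {card S | S. S \<subseteq> {1..n} \<and> incr \<pi> S}"
  by (simp add: incr_def)

lemma LIS_fin: "finite {card S | S. S \<subseteq> {1..n} \<and> incr \<pi> S}"
proof -
  have "{card S | S. S \<subseteq> {1..n} \<and> incr \<pi> S} \<subseteq> card ` Pow {1..n}" by auto
  then show ?thesis by (rule finite_subset) simp
qed

lemma LIS_mem: "\<exists>S. S \<subseteq> {1..n} \<and> incr \<pi> S \<and> card S = LIS n \<pi>"
proof -
  have ne: "{card S | S. S \<subseteq> {1..n} \<and> incr \<pi> S} \<noteq> {}"
    by (auto intro!: exI[of _ "{}"] simp: incr_def)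
  show ?thesis using Max_in[OF LIS_fin ne] unfolding LIS_def LIS_set by auto
qed

lemma LIS_ge: "S \<subseteq> {1..n} \<Longrightarrow> incr \<pi> S \<Longrightarrow> card S \<le> LIS n \<pi>"
  unfolding LIS_def LIS_set by (rule Max_ge[OF LIS_fin]) auto

lemma LIS_move:
  fixes \<pi> \<pi>' :: "nat \<Rightarrow> nat"
  assumes "\<forall>i\<in>{1..n}. i < P \<longrightarrow> \<pi>' i = \<pi> i"
    and "\<forall>i\<in>{1..n}. \<forall>j\<in>{1..n}. P < i \<longrightarrow> P < j \<longrightarrow> \<pi> i < \<pi> j \<longrightarrow> \<pi>' i < \<pi>' j"
    and "\<forall>j\<in>{1..n}. P < j \<longrightarrow> \<pi> P < \<pi> j \<longrightarrow> \<pi> P \<le> \<pi>' j"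
    and "\<forall>i\<in>{1..n}. \<forall>j\<in>{1..n}. P < i \<longrightarrow> P < j \<longrightarrow> \<pi> i < \<pi> j \<longrightarrow> \<pi> i \<le> \<pi>' j"
  shows "LIS n \<pi> \<le> Suc (LIS n \<pi>')"
proof -
  obtain S where S: "S \<subseteq> {1..n}" "incr \<pi> S" "card S = LIS n \<pi>" using LIS_mem by blast
  have "finite S" using S(1) finite_subset by blast
  then obtain S' where S': "S' \<subseteq> S" "incr \<pi>' S'" "card S \<le> Suc (card S')"
    using inc_move[OF assms _ S(1) S(2)] by blast
  have "card S' \<le> LIS n \<pi>'" using S' S(1) by (intro LIS_ge) auto
  then show ?thesis using S S' by simp
qed




lemma tail:
  assumes q: "q > 0" and bd: "BD (Suc m) H" and m: "m > 0" and t: "t > 0"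
  shows "avg (Kc (Suc m)) (W q) (\<lambda>cs. if H cs - avg (Kc (Suc m)) (W q) H > t * sqrt m then 1 else 0)
         < exp (- (t\<^sup>2) / 2)"
proof -
  interpret K: wsp "Kc (Suc m)" "W q" using wsp_Kc[OF q] .
  define \<mu> where "\<mu> = avg (Kc (Suc m)) (W q) H"
  define s where "s = t * sqrt m"
  define l where "l = t / sqrt m"
  have sm: "sqrt (real m) > 0" using m by simp
  have l0: "l > 0" using t sm by (simp add: l_def)
  have s0: "s > 0" using t sm by (simp add: s_def)
  have ind: "(if y > s then 1 else 0) \<le> exp (l * (y - s))" for y
  proof (cases "y > s")
    case True then have "l * (y - s) \<ge> 0" using l0 by simp
    then show ?thesis using True by simp
  qed simp
  obtain j where j: "j \<in> Kc (Suc m)" "H j \<le> \<mu>" using K.avg_exists_le[of H] by (auto simp: \<mu>_def)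
  have "avg (Kc (Suc m)) (W q) (\<lambda>cs. if H cs - \<mu> > s then 1 else 0)
      < avg (Kc (Suc m)) (W q) (\<lambda>cs. exp (l * ((H cs - \<mu>) - s)))"
  proof (rule K.avg_strict[OF _ j(1)])
    show "(if H i - \<mu> > s then 1 else 0) \<le> exp (l * ((H i - \<mu>) - s))" for i by (rule ind)
    show "(if H j - \<mu> > s then 1 else 0) < exp (l * ((H j - \<mu>) - s))" using j s0 by simp
  qed
  also have "avg (Kc (Suc m)) (W q) (\<lambda>cs. exp (l * ((H cs - \<mu>) - s)))
      = avg (Kc (Suc m)) (W q) (\<lambda>cs. exp (l * (H cs - \<mu>))) * exp (- (l * s))"
  proof -
    have e: "exp (l * ((H cs - \<mu>) - s)) = exp (l * (H cs - \<mu>)) * exp (- (l * s))" for cs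
      by (simp add: exp_add[symmetric] right_diff_distrib)
    show ?thesis unfolding e by (rule K.avg_multc)
  qed
  also have "\<dots> \<le> exp (l\<^sup>2 / 2) ^ m * exp (- (l * s))"
    using AZ[OF q less_imp_le[OF l0] bd] by (simp add: \<mu>_def)
  also have "exp (l\<^sup>2 / 2) ^ m * exp (- (l * s)) = exp (real m * (l\<^sup>2 / 2) - l * s)"
  proof -
    have "exp (real m * (l\<^sup>2 / 2) - l * s) = exp (real m * (l\<^sup>2 / 2)) * exp (- (l * s))"
      by (simp add: exp_add[symmetric])
    then show ?thesis by (simp only: exp_of_nat_mult)
  qed
  also have "real m * (l\<^sup>2 / 2) - l * s = - (t\<^sup>2) / 2"
  proof -
    have sq: "sqrt (real m) ^ 2 = real m" by simp
    have "real m * l\<^sup>2 = t\<^sup>2" unfolding l_def power_divide sq using m by simp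
    moreover have "l * s = t\<^sup>2" unfolding l_def s_def using sm by (simp add: power2_eq_square)
    ultimately show ?thesis by simp
  qed
  finally show ?thesis by (simp add: s_def \<mu>_def)
qed

lemma cond_facts:
  fixes g :: "nat \<Rightarrow> nat"
  assumes g: "strict_mono g"
  shows "g (sh c x) < g (sh c z) \<longleftrightarrow> g (sh c' x) < g (sh c' z)"
    and "g c < g (sh c z) \<Longrightarrow> g c \<le> g (sh c' z)"
    and "g (sh c x) < g (sh c z) \<Longrightarrow> g (sh c x) \<le> g (sh c' z)"
proof -
  show "g (sh c x) < g (sh c z) \<longleftrightarrow> g (sh c' x) < g (sh c' z)"
    by (simp add: strict_mono_less[OF g])
  show "g c < g (sh c z) \<Longrightarrow> g c \<le> g (sh c' z)"
    by (simp add: strict_mono_less[OF g] strict_mono_less_eq[OF g] sh_def split: if_splits)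
  show "g (sh c x) < g (sh c z) \<Longrightarrow> g (sh c x) \<le> g (sh c' z)"
    by (simp add: strict_mono_less[OF g] strict_mono_less_eq[OF g] sh_def split: if_splits)
qed

lemma permof_at:
  assumes K: "p @ c # ds \<in> Kc n" and i: "i \<in> {1..n}"
  shows "i < Suc (length p) \<Longrightarrow> permof n (p @ c # ds) i = Suc (pat p ! (i - 1))"
    and "i = Suc (length p) \<Longrightarrow> permof n (p @ c # ds) i = Suc (Gp p c)"
    and "i > Suc (length p) \<Longrightarrow> permof n (p @ c # ds) i = Suc (Gp p (sh c (pat ds ! (i - Suc (Suc (length p))))))"
proof -
  have len: "length p + Suc (length ds) = n" using Kc_length[OF K] by simp
  have pe: "pat (p @ c # ds) = pat p @ (Gp p c # map (Gp p \<circ> sh c) (pat ds))"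
    by (simp add: pat_append)
  have pi: "permof n (p @ c # ds) i = Suc (pat (p @ c # ds) ! (i - 1))" using i by (simp add: permof_def)
  show "i < Suc (length p) \<Longrightarrow> permof n (p @ c # ds) i = Suc (pat p ! (i - 1))"
  proof -
    assume "i < Suc (length p)"
    then have "i - 1 < length p" using i by (simp, arith)
    then show ?thesis unfolding pi pe by (simp add: nth_append)
  qed
  show "i = Suc (length p) \<Longrightarrow> permof n (p @ c # ds) i = Suc (Gp p c)"
    unfolding pi pe by (simp add: nth_append)
  assume gt: "i > Suc (length p)"
  define k where "k = i - Suc (Suc (length p))"
  have ik: "i - 1 = length p + Suc k" using gt by (simp add: k_def)
  have kl: "k < length ds" using gt i len by (simp add: k_def)
  show "permof n (p @ c # ds) i = Suc (Gp p (sh c (pat ds ! (i - Suc (Suc (length p))))))"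
    unfolding pi pe ik k_def[symmetric] using kl by (simp add: nth_append)
qed

lemma LIS_step:
  assumes K1: "p @ c # ds \<in> Kc n" and K2: "p @ c' # ds \<in> Kc n"
  shows "LIS n (permof n (p @ c # ds)) \<le> Suc (LIS n (permof n (p @ c' # ds)))"
proof (rule LIS_move[where P = "Suc (length p)"])
  define g where "g = Gp p"
  have g: "strict_mono g" unfolding g_def by (rule strict_mono_Gp)
  define x where "x = (\<lambda>i. pat ds ! (i - Suc (Suc (length p))))"
  have v1: "permof n (p @ c # ds) i = Suc (g (sh c (x i)))" if "i \<in> {1..n}" "Suc (length p) < i" for i
    using permof_at(3)[OF K1 that] by (simp add: g_def x_def)
  have v2: "permof n (p @ c' # ds) i = Suc (g (sh c' (x i)))" if "i \<in> {1..n}" "Suc (length p) < i" for i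
    using permof_at(3)[OF K2 that] by (simp add: g_def x_def)
  have P: "Suc (length p) \<in> {1..n}" using Kc_length[OF K1] by simp
  have vP: "permof n (p @ c # ds) (Suc (length p)) = Suc (g c)"
    using permof_at(2)[OF K1 P refl] by (simp add: g_def)
  show "\<forall>i\<in>{1..n}. i < Suc (length p) \<longrightarrow> permof n (p @ c' # ds) i = permof n (p @ c # ds) i"
  proof (intro ballI impI)
    fix i assume "i \<in> {1..n}" "i < Suc (length p)"
    then show "permof n (p @ c' # ds) i = permof n (p @ c # ds) i"
      using permof_at(1)[OF K1] permof_at(1)[OF K2] by metis
  qed
  show "\<forall>i\<in>{1..n}. \<forall>j\<in>{1..n}. Suc (length p) < i \<longrightarrow> Suc (length p) < j \<longrightarrow>
      permof n (p @ c # ds) i < permof n (p @ c # ds) j \<longrightarrow> permof n (p @ c' # ds) i < permof n (p @ c' # ds) j"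
  proof (intro ballI impI)
    fix i j assume ij: "i \<in> {1..n}" "j \<in> {1..n}" "Suc (length p) < i" "Suc (length p) < j"
      and lt: "permof n (p @ c # ds) i < permof n (p @ c # ds) j"
    from lt have "g (sh c (x i)) < g (sh c (x j))" using v1 ij by simp
    then have "g (sh c' (x i)) < g (sh c' (x j))" using cond_facts(1)[OF g] by blast
    then show "permof n (p @ c' # ds) i < permof n (p @ c' # ds) j" using v2 ij by simp
  qed
  show "\<forall>j\<in>{1..n}. Suc (length p) < j \<longrightarrow> permof n (p @ c # ds) (Suc (length p)) < permof n (p @ c # ds) j \<longrightarrow>
      permof n (p @ c # ds) (Suc (length p)) \<le> permof n (p @ c' # ds) j"
  proof (intro ballI impI)
    fix j assume j: "j \<in> {1..n}" "Suc (length p) < j"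
      and lt: "permof n (p @ c # ds) (Suc (length p)) < permof n (p @ c # ds) j"
    from lt have "g c < g (sh c (x j))" using v1 j vP by simp
    then have "g c \<le> g (sh c' (x j))" using cond_facts(2)[OF g] by blast
    then show "permof n (p @ c # ds) (Suc (length p)) \<le> permof n (p @ c' # ds) j" using v2 j vP by simp
  qed
  show "\<forall>i\<in>{1..n}. \<forall>j\<in>{1..n}. Suc (length p) < i \<longrightarrow> Suc (length p) < j \<longrightarrow>
      permof n (p @ c # ds) i < permof n (p @ c # ds) j \<longrightarrow> permof n (p @ c # ds) i \<le> permof n (p @ c' # ds) j"
  proof (intro ballI impI)
    fix i j assume ij: "i \<in> {1..n}" "j \<in> {1..n}" "Suc (length p) < i" "Suc (length p) < j"
      and lt: "permof n (p @ c # ds) i < permof n (p @ c # ds) j"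
    from lt have "g (sh c (x i)) < g (sh c (x j))" using v1 ij by simp
    then have "g (sh c (x i)) \<le> g (sh c' (x j))" using cond_facts(3)[OF g] by blast
    then show "permof n (p @ c # ds) i \<le> permof n (p @ c' # ds) j" using v1 v2 ij by simp
  qed
qed

lemma BD_LIS: "BD n (\<lambda>cs. real (LIS n (permof n cs)))"
  unfolding BD_def
proof (intro allI impI)
  fix p c c' cs assume K1: "p @ c # cs \<in> Kc n" and K2: "p @ c' # cs \<in> Kc n"
  show "\<bar>real (LIS n (permof n (p @ c # cs))) - real (LIS n (permof n (p @ c' # cs)))\<bar> \<le> 1"
    using LIS_step[OF K1 K2] LIS_step[OF K2 K1] by linarith
qed

lemma E_eq:
  assumes q: "q > 0"
  shows "mallows_E n q X = avg (Kc n) (W q) (\<lambda>cs. X (permof n cs))"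
proof -
  have Z: "mallows_Z n q = (\<Sum>cs\<in>Kc n. W q cs)"
    unfolding mallows_Z_def sum_perms by (intro sum.cong) (auto simp: W_def inv_permof)
  have "mallows_E n q X = (\<Sum>cs\<in>Kc n. W q cs / mallows_Z n q * X (permof n cs))"
    unfolding mallows_E_def sum_perms mallows_def by (intro sum.cong) (auto simp: W_def inv_permof)
  also have "\<dots> = avg (Kc n) (W q) (\<lambda>cs. X (permof n cs))"
    unfolding avg_def Z by (simp add: sum_divide_distrib)
  finally show ?thesis .
qed

lemma P_eq:
  shows "mallows_P n q A = mallows_E n q (\<lambda>\<pi>. if A \<pi> then 1 else 0)"
proof -
  have fin: "finite (perms n)" unfolding perms_def by (rule finite_permutations) simp
  show ?thesis unfolding mallows_P_def mallows_E_def sum.inter_filter[OF fin]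
    by (intro sum.cong) auto
qed




theorem proposition1p8:
  fixes n :: nat and q :: real
  assumes "n \<ge> 1" and "q > 0"
  shows "mallows_Var n q (\<lambda>\<pi>. real (LIS n \<pi>)) \<le> real n - 1 \<and>
    (\<forall>t::real. t > 0 \<longrightarrow>
      mallows_P n q (\<lambda>\<pi>. \<bar>real (LIS n \<pi>) - mallows_E n q (\<lambda>\<sigma>. real (LIS n \<sigma>))\<bar>
                          > t * sqrt (real n - 1))
      < 2 * exp (- (t\<^sup>2) / 2))"
proof -
  have q: "q > 0" by fact
  obtain m where n: "n = Suc m" using assms(1) by (cases n) auto
  define F where "F = (\<lambda>cs. real (LIS n (permof n cs)))"
  interpret K: wsp "Kc n" "W q" using wsp_Kc[OF q] .
  have bd: "BD (Suc m) F" using BD_LIS[of n] by (simp add: F_def n)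
  define \<mu> where "\<mu> = avg (Kc n) (W q) F"
  have EF: "mallows_E n q (\<lambda>\<sigma>. real (LIS n \<sigma>)) = \<mu>"
    by (simp add: E_eq[OF q] F_def \<mu>_def)
  have nm: "real n - 1 = real m" by (simp add: n)
  have var: "mallows_Var n q (\<lambda>\<pi>. real (LIS n \<pi>)) \<le> real n - 1"
  proof -
    have "mallows_Var n q (\<lambda>\<pi>. real (LIS n \<pi>)) = avg (Kc n) (W q) (\<lambda>cs. (F cs - \<mu>)\<^sup>2)"
      unfolding mallows_Var_def EF by (simp add: E_eq[OF q] F_def)
    also have "\<dots> \<le> real m" using VB[OF q bd] by (simp add: \<mu>_def n)
    finally show ?thesis using nm by simp
  qed
  have tl: "mallows_P n q (\<lambda>\<pi>. \<bar>real (LIS n \<pi>) - mallows_E n q (\<lambda>\<sigma>. real (LIS n \<sigma>))\<bar>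
                          > t * sqrt (real n - 1)) < 2 * exp (- (t\<^sup>2) / 2)" if t: "t > 0" for t
  proof -
    define s where "s = t * sqrt (real m)"
    have P: "mallows_P n q (\<lambda>\<pi>. \<bar>real (LIS n \<pi>) - mallows_E n q (\<lambda>\<sigma>. real (LIS n \<sigma>))\<bar>
                          > t * sqrt (real n - 1)) = avg (Kc n) (W q) (\<lambda>cs. if \<bar>F cs - \<mu>\<bar> > s then 1 else 0)"
      unfolding P_eq E_eq[OF q] EF[unfolded E_eq[OF q]] nm s_def by (simp add: F_def)
    show ?thesis
    proof (cases "m = 0")
      case True
      have "W q [0] > 0" by (simp add: W_def)
      then have "avg (Kc n) (W q) (\<lambda>cs. if \<bar>F cs - \<mu>\<bar> > s then 1 else 0) = 0"
        using True by (simp add: n Kc_one avg_singleton \<mu>_def s_def)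
      then show ?thesis unfolding P by simp
    next
      case False
      then have m: "m > 0" by simp
      have t1: "avg (Kc n) (W q) (\<lambda>cs. if F cs - \<mu> > s then 1 else 0) < exp (- (t\<^sup>2) / 2)"
        using tail[OF q bd m t] by (simp add: n \<mu>_def s_def)
      have mu': "avg (Kc n) (W q) (\<lambda>cs. - F cs) = - \<mu>" by (simp add: K.avg_uminus \<mu>_def)
      have t2: "avg (Kc n) (W q) (\<lambda>cs. if - F cs - (- \<mu>) > s then 1 else 0) < exp (- (t\<^sup>2) / 2)"
        using tail[OF q BD_uminus[OF bd] m t] mu' by (simp add: n s_def)
      have "avg (Kc n) (W q) (\<lambda>cs. if \<bar>F cs - \<mu>\<bar> > s then 1 else 0)
          \<le> avg (Kc n) (W q) (\<lambda>cs. (if F cs - \<mu> > s then 1 else 0) + (if - F cs - (- \<mu>) > s then 1 else 0))"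
        by (rule K.avg_mono) auto
      also have "\<dots> = avg (Kc n) (W q) (\<lambda>cs. if F cs - \<mu> > s then 1 else 0)
                     + avg (Kc n) (W q) (\<lambda>cs. if - F cs - (- \<mu>) > s then 1 else 0)"
        by (rule K.avg_add)
      also have "\<dots> < 2 * exp (- (t\<^sup>2) / 2)" using t1 t2 by simp
      finally show ?thesis unfolding P .
    qed
  qed
  show ?thesis using var tl by blast
qed


end
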